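(* For every $\delta\in\mathbb R$, $$\mathrm{tr}(F_A\wedge Q^\delta_-+Q^\delta_-\wedge F_A)=0,\qquad \mathrm{tr}(F_A\wedge Q^\delta_++Q^\delta_+\wedge F_A)=0,\qquad \mathrm{tr}(F_A\wedge Q_0+Q_0\wedge F_A)=0.$$ Consequently $\mathrm{tr}(F_A\wedge Q^\delta_m+Q^\delta_m\wedge F_A)=0$ for all $\delta,m\in\mathbb R$, where $Q^\delta_m=(1-\delta+m)Q^\delta_-+(1+\delta)Q^\delta_++\delta^2Q_0$.
   Context: Let $(V,g_V,\omega,\Omega)$ be a Calabi–Yau 3-orbifold and $\pi:K\to V$ a non-trivial principal $S^1$-(orbi)bundle with connection 1-form $\eta$, $d\eta=\pi^*\omega$; pullbacks are suppressed. Locally use a coframe $e_0=\epsilon\eta,e_1,e_2,e_3,Je_1,Je_2,Je_3$ ($\epsilon>0$), with $e_i,Je_i$ pulled back from a local $\mathrm{SU}(3)$-coframe on $V$ such that $\omega=\sum_i e_i\wedge Je_i$ and $\Omega=(e_1+iJe_1)\wedge(e_2+iJe_2)\wedge(e_3+iJe_3)$; $e=(e_1,e_2,e_3)^{T}$, $Je=(Je_1,Je_2,Je_3)^{T}$, $I$ the $3\times3$ identity. For a column $x=(x_1,x_2,x_3)^T$ of 1-forms, $[x]$ is the matrix with rows $(0,x_3,-x_2),(-x_3,0,x_1),(x_2,-x_1,0)$; for columns $x,y$, $x\times y=(x_2\wedge y_3-x_3\wedge y_2,\ x_3\wedge y_1-x_1\wedge y_3,\ x_1\wedge y_2-x_2\wedge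 y_1)^T$; $e\wedge Je^T$ is the matrix with entries $e_i\wedge Je_j$, etc. The pulled-back Levi-Civita connection of $g_V$ satisfies $de=-a\wedge e-b\wedge Je$, $d(Je)=b\wedge e-a\wedge Je$ ($a$ skew, $b$ symmetric traceless matrices of 1-forms); in $7\times7$ block form w.r.t. $(e_0,e,Je)$, $A=\begin{pmatrix}0&0&0\\0&a&b\\0&-b&a\end{pmatrix}$ and $F_A=dA+A\wedge A=\begin{pmatrix}0&0&0\\0&\alpha&\beta\\0&-\beta&\alpha\end{pmatrix}$ ($\alpha$ skew, $\beta$ symmetric traceless matrices of 2-forms). Further $Q^\delta_-=e_0\wedge\begin{pmatrix}0&(1+\delta)e^T&(1+\delta)Je^T\\-(1+\delta)e&-2\delta[Je]&-2\delta[e]\\-(1+\delta)Je&-2\delta[e]&2\delta[Je]\end{pmatrix}$, $Q^\delta_+=\begin{pmatrix}0&2\delta(e\times Je)^T&\delta(e\times e-Je\times Je)^T\\-2\delta(e\times Je)&-(1+\delta)Je\wedge Je^T&(1+\delta)Je\wedge e^T\\-\delta(e\times e-Je\times Je)&(1+\delta)e\wedge Je^T&-(1+\delta)e\wedge e^T\end{pmatrix}$, $Q_0=\frac12\begin{pmatrix}0&0&0\\0&-[e\times e+Je\times Je]&-2([e]\wedge[Je]-[Je]\wedge[e])\\0&2([e]\wedge[Je]-[Je]\wedge[e])&-[e\times e+Je\times Je]\end{pmatrix}$. Products of matrices of forms use the wedge product, and $\mathrm{tr}(X\wedge Y)=\sum_{i,j}X_{ij}\wedge Y_{ji}$. *)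

theory Defs
  imports Complex_Main
begin

text \<open>Pointwise model of the exterior algebra of the 7-dimensional space spanned by the
coframe (e_0, e_1, e_2, e_3, Je_1, Je_2, Je_3).  A form is given by its coefficients with
respect to the basis  dx_S = dx_{s_1} wedge ... wedge dx_{s_k}  (s_1 < ... < s_k), S a finite
set of indices; index 0 is e_0, indices 1,2,3 are e_1,e_2,e_3 and 4,5,6 are Je_1,Je_2,Je_3.\<close>

type_synonym form = "nat set \<Rightarrow> real"
type_synonym fmat = "nat \<Rightarrow> nat \<Rightarrow> form"
type_synonym fvec = "nat \<Rightarrow> form"

definition fzero :: form where "fzero = (\<lambda>S. 0)"
definition fadd :: "form \<Rightarrow> form \<Rightarrow> form" where "fadd a b = (\<lambda>S. a S + b S)"
definition fneg :: "form \<Rightarrow> form" where "fneg a = (\<lambda>S. - a S)"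
definition fscale :: "real \<Rightarrow> form \<Rightarrow> form" where "fscale c a = (\<lambda>S. c * a S)"
definition fsum :: "('i \<Rightarrow> form) \<Rightarrow> 'i set \<Rightarrow> form" where
  "fsum f I = (\<lambda>S. \<Sum>i\<in>I. f i S)"

text \<open>Wedge product: the coefficient of dx_S in a wedge b is the sum over A \<subseteq> S of
sign(A, S-A) * a_A * b_{S-A}, the sign being that of the shuffle putting A before S-A.\<close>
definition fwedge :: "form \<Rightarrow> form \<Rightarrow> form" where
  "fwedge a b = (\<lambda>S. if finite S then
     (\<Sum>A\<in>Pow S. (-1::real) ^ card {(p,q). p \<in> A \<and> q \<in> S - A \<and> q < p} * a A * b (S - A))
   else 0)"

definition dx :: "nat \<Rightarrow> form" where "dx i = (\<lambda>S. if S = {i} then 1 else 0)"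

definition e0 :: form where "e0 = dx 0"
definition ev :: fvec where "ev i = dx (Suc i)"          (* e_{i+1},  i = 0,1,2 *)
definition Jev :: fvec where "Jev i = dx (i + 4)"        (* Je_{i+1}, i = 0,1,2 *)

text \<open>A 2-form pulled back from V: only components dx_S with S a 2-subset of {1..6}.\<close>
definition horiz_2form :: "form \<Rightarrow> bool" where
  "horiz_2form f \<longleftrightarrow> (\<forall>S. f S \<noteq> 0 \<longrightarrow> S \<subseteq> {1..6} \<and> card S = 2)"

definition bracket :: "fvec \<Rightarrow> fmat" where
  "bracket x i j = [[fzero, x 2, fneg (x 1)], [fneg (x 2), fzero, x 0], [x 1, fneg (x 0), fzero]] ! i ! j"

definition cross :: "fvec \<Rightarrow> fvec \<Rightarrow> fvec" where
  "cross x y i = [fadd (fwedge (x 1) (y 2)) (fneg (fwedge (x 2) (y 1))),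
                  fadd (fwedge (x 2) (y 0)) (fneg (fwedge (x 0) (y 2))),
                  fadd (fwedge (x 0) (y 1)) (fneg (fwedge (x 1) (y 0)))] ! i"

definition vadd :: "fvec \<Rightarrow> fvec \<Rightarrow> fvec" where "vadd x y i = fadd (x i) (y i)"
definition vscale :: "real \<Rightarrow> fvec \<Rightarrow> fvec" where "vscale c x i = fscale c (x i)"

definition outer :: "fvec \<Rightarrow> fvec \<Rightarrow> fmat" where "outer x y i j = fwedge (x i) (y j)"
definition mwedge3 :: "fmat \<Rightarrow> fmat \<Rightarrow> fmat" where
  "mwedge3 X Y i j = fsum (\<lambda>k. fwedge (X i k) (Y k j)) {..<3}"
definition madd :: "fmat \<Rightarrow> fmat \<Rightarrow> fmat" where "madd X Y i j = fadd (X i j) (Y i j)"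
definition mscale :: "real \<Rightarrow> fmat \<Rightarrow> fmat" where "mscale c X i j = fscale c (X i j)"
definition mneg :: "fmat \<Rightarrow> fmat" where "mneg X i j = fneg (X i j)"
definition mzero :: fmat where "mzero i j = fzero"

text \<open>Blocks of a 7x7 matrix w.r.t. (e_0, e, Je): a 1x1 block, 1x3 rows, 3x1 columns, 3x3 blocks.\<close>
definition rowb :: "fvec \<Rightarrow> fmat" where "rowb v k l = v l"
definition colb :: "fvec \<Rightarrow> fmat" where "colb v k l = v k"

definition blkidx :: "nat \<Rightarrow> nat \<times> nat" where
  "blkidx i = (if i = 0 then (0, 0) else if i \<le> 3 then (1, i - 1) else (2, i - 4))"

definition blk :: "fmat \<Rightarrow> fmat \<Rightarrow> fmat \<Rightarrow> fmat \<Rightarrow> fmat \<Rightarrow> fmat \<Rightarrow> fmat \<Rightarrow> fmat \<Rightarrow> fmat \<Rightarrow> fmat" where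
  "blk b00 b01 b02 b10 b11 b12 b20 b21 b22 i j =
     ([[b00, b01, b02], [b10, b11, b12], [b20, b21, b22]] ! fst (blkidx i) ! fst (blkidx j))
       (snd (blkidx i)) (snd (blkidx j))"

definition madd7 :: "fmat \<Rightarrow> fmat \<Rightarrow> fmat" where "madd7 X Y i j = fadd (X i j) (Y i j)"
definition mscale7 :: "real \<Rightarrow> fmat \<Rightarrow> fmat" where "mscale7 c X i j = fscale c (X i j)"

definition trw :: "fmat \<Rightarrow> fmat \<Rightarrow> form" where
  "trw X Y = fsum (\<lambda>i. fsum (\<lambda>j. fwedge (X i j) (Y j i)) {..<7}) {..<7}"

definition FA :: "fmat \<Rightarrow> fmat \<Rightarrow> fmat" where
  "FA \<alpha> \<beta> = blk mzero mzero mzero mzero \<alpha> \<beta> mzero (mneg \<beta>) \<alpha>"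

definition Qminus :: "real \<Rightarrow> fmat" where
  "Qminus \<delta> = (\<lambda>i j. fwedge e0
     (blk mzero (rowb (vscale (1 + \<delta>) ev)) (rowb (vscale (1 + \<delta>) Jev))
          (colb (vscale (-(1 + \<delta>)) ev)) (mscale (-2 * \<delta>) (bracket Jev)) (mscale (-2 * \<delta>) (bracket ev))
          (colb (vscale (-(1 + \<delta>)) Jev)) (mscale (-2 * \<delta>) (bracket ev)) (mscale (2 * \<delta>) (bracket Jev)) i j))"

definition Qplus :: "real \<Rightarrow> fmat" where
  "Qplus \<delta> = (let c1 = cross ev Jev; c2 = vadd (cross ev ev) (vscale (-1) (cross Jev Jev)) in
     blk mzero (rowb (vscale (2 * \<delta>) c1)) (rowb (vscale \<delta> c2))
         (colb (vscale (-2 * \<delta>) c1)) (mscale (-(1 + \<delta>)) (outer Jev Jev)) (mscale (1 + \<delta>) (outer Jev ev))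
         (colb (vscale (-\<delta>) c2)) (mscale (1 + \<delta>) (outer ev Jev)) (mscale (-(1 + \<delta>)) (outer ev ev)))"

definition Qzero :: fmat where
  "Qzero = (let s = vadd (cross ev ev) (cross Jev Jev);
               C = madd (mwedge3 (bracket ev) (bracket Jev)) (mneg (mwedge3 (bracket Jev) (bracket ev))) in
     mscale7 (1/2) (blk mzero mzero mzero
                       mzero (mneg (bracket s)) (mscale (-2) C)
                       mzero (mscale 2 C) (mneg (bracket s))))"

definition Qm :: "real \<Rightarrow> real \<Rightarrow> fmat" where
  "Qm \<delta> m = madd7 (mscale7 (1 - \<delta> + m) (Qminus \<delta>))
               (madd7 (mscale7 (1 + \<delta>) (Qplus \<delta>)) (mscale7 (\<delta>^2) Qzero))"

definition trFQ :: "fmat \<Rightarrow> fmat \<Rightarrow> fmat \<Rightarrow> form" where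
  "trFQ \<alpha> \<beta> Q = fadd (trw (FA \<alpha> \<beta>) Q) (trw Q (FA \<alpha> \<beta>))"

end

theory Submission
  imports Defs
begin


definition invs :: "nat set \<Rightarrow> nat set \<Rightarrow> (nat\<times>nat) set" where
  "invs A B = {(p,q). p \<in> A \<and> q \<in> B \<and> q < p}"

lemma fwedge_alt: "fwedge a b S = (if finite S then
   (\<Sum>A\<in>Pow S. (-1::real) ^ card (invs A (S - A)) * a A * b (S - A)) else 0)"
  unfolding fwedge_def invs_def by simp

lemma invs_finite: "finite A \<Longrightarrow> finite (invs A B)"
  unfolding invs_def by (rule finite_subset[of _ "A \<times> (\<Union>p\<in>A. {..<p})"]) auto

lemma invs_union_left: "finite A \<Longrightarrow> finite C \<Longrightarrow> A \<inter> C = {} \<Longrightarrow>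
   card (invs (A \<union> C) D) = card (invs A D) + card (invs C D)"
proof -
  assume f: "finite A" "finite C" and d: "A \<inter> C = {}"
  have "invs (A \<union> C) D = invs A D \<union> invs C D" unfolding invs_def by auto
  moreover have "invs A D \<inter> invs C D = {}" using d unfolding invs_def by auto
  ultimately show ?thesis using f invs_finite by (simp add: card_Un_disjoint)
qed

lemma invs_union_right: "finite A \<Longrightarrow> C \<inter> D = {} \<Longrightarrow>
   card (invs A (C \<union> D)) = card (invs A C) + card (invs A D)"
proof -
  assume f: "finite A" and d: "C \<inter> D = {}"
  have "invs A (C \<union> D) = invs A C \<union> invs A D" unfolding invs_def by auto
  moreover have "invs A C \<inter> invs A D = {}" using d unfolding invs_def by auto
  ultimately show ?thesis using f invs_finite by (simp add: card_Un_disjoint)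
qed

lemma invs_swap: "finite A \<Longrightarrow> finite D \<Longrightarrow> A \<inter> D = {} \<Longrightarrow>
   card (invs A D) + card (invs D A) = card A * card D"
proof -
  assume f: "finite A" "finite D" and d: "A \<inter> D = {}"
  have "A \<times> D = invs A D \<union> (\<lambda>(x,y). (y,x)) ` invs D A" using d unfolding invs_def
    by (auto simp: image_iff)
  moreover have "invs A D \<inter> (\<lambda>(x,y). (y,x)) ` invs D A = {}" unfolding invs_def by auto
  moreover have "card ((\<lambda>(x,y). (y,x)) ` invs D A) = card (invs D A)"
    by (rule card_image) (auto simp: inj_on_def)
  ultimately show ?thesis using f invs_finite
    by (metis card_Un_disjoint card_cartesian_product finite_imageI)
qed




lemma sgn_assoc:
  assumes "finite S" "A \<subseteq> B" "B \<subseteq> S"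
  shows "(-1::real) ^ card (invs B (S - B)) * (-1) ^ card (invs A (B - A)) =
         (-1) ^ card (invs A (S - A)) * (-1) ^ card (invs (B - A) (S - A - (B - A)))"
proof -
  have fB: "finite B" using assms(1,3) by (rule finite_subset[rotated])
  have fA: "finite A" "finite B" "finite (B - A)" using fB assms(2) finite_subset by auto
  have e1: "B = A \<union> (B - A)" "S - A = (B - A) \<union> (S - B)" "S - A - (B - A) = S - B" using assms by auto
  have "card (invs B (S - B)) = card (invs A (S - B)) + card (invs (B - A) (S - B))"
    using invs_union_left[of A "B - A" "S - B"] fA e1(1) by auto
  moreover have "card (invs A (S - A)) = card (invs A (B - A)) + card (invs A (S - B))"
    using invs_union_right[of A "B - A" "S - B"] fA e1(2) by auto
  ultimately show ?thesis using e1(3) by (simp add: power_add[symmetric] add_ac)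
qed

lemma fwedge_assoc: "fwedge (fwedge a b) c = fwedge a (fwedge b c)"
proof (rule ext)
  fix S :: "nat set"
  show "fwedge (fwedge a b) c S = fwedge a (fwedge b c) S"
  proof (cases "finite S")
    case False thus ?thesis by (simp add: fwedge_alt)
  next
    case True
    define sg where "sg = (\<lambda>A B. (-1::real) ^ card (invs A B))"
    have L: "fwedge (fwedge a b) c S = (\<Sum>(B,A)\<in>Sigma (Pow S) Pow.
        sg B (S - B) * sg A (B - A) * a A * b (B - A) * c (S - B))" (is "_ = ?RR")
    proof -
      have "fwedge (fwedge a b) c S = (\<Sum>B\<in>Pow S. \<Sum>A\<in>Pow B.
          sg B (S - B) * sg A (B - A) * a A * b (B - A) * c (S - B))"
        unfolding fwedge_alt[of "fwedge a b"] using True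
        apply (simp add: sg_def)
        apply (rule sum.cong, simp)
        apply (subst fwedge_alt)
        using finite_subset apply (simp add: sum_distrib_left sum_distrib_right mult_ac)
        done
      also have "\<dots> = ?RR" using True
        by (subst sum.Sigma) (auto intro: finite_subset)
      finally show ?thesis .
    qed
    have R: "fwedge a (fwedge b c) S = (\<Sum>(A,C)\<in>Sigma (Pow S) (\<lambda>A. Pow (S - A)).
        sg A (S - A) * sg C (S - A - C) * a A * b C * c (S - A - C))" (is "_ = ?RR")
    proof -
      have "fwedge a (fwedge b c) S = (\<Sum>A\<in>Pow S. \<Sum>C\<in>Pow (S - A).
          sg A (S - A) * sg C (S - A - C) * a A * b C * c (S - A - C))"
        unfolding fwedge_alt[of a] using True
        apply (simp add: sg_def)
        apply (rule sum.cong, simp)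
        apply (subst fwedge_alt)
        apply (simp add: sum_distrib_left sum_distrib_right mult_ac)
        done
      also have "\<dots> = ?RR" using True
        by (subst sum.Sigma) (auto intro: finite_subset)
      finally show ?thesis .
    qed
    have "(\<Sum>(B,A)\<in>Sigma (Pow S) Pow.
        sg B (S - B) * sg A (B - A) * a A * b (B - A) * c (S - B)) =
        (\<Sum>(A,C)\<in>Sigma (Pow S) (\<lambda>A. Pow (S - A)).
        sg A (S - A) * sg C (S - A - C) * a A * b C * c (S - A - C))"
    proof (rule sum.reindex_bij_witness[of _ "\<lambda>(A,C). (A \<union> C, A)" "\<lambda>(B,A). (A, B - A)"])
      fix x assume x: "x \<in> Sigma (Pow S) Pow"
      obtain B A where xe: "x = (B, A)" by (cases x)
      have h: "S - A - (B - A) = S - B" using x xe by auto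
      have "sg B (S - B) * sg A (B - A) = sg A (S - A) * sg (B - A) (S - A - (B - A))"
        using sgn_assoc[of S A B] True x xe unfolding sg_def by auto
      then show "(case (case x of (B, A) \<Rightarrow> (A, B - A)) of
          (A, C) \<Rightarrow> sg A (S - A) * sg C (S - A - C) * a A * b C * c (S - A - C)) =
          (case x of (B, A) \<Rightarrow> sg B (S - B) * sg A (B - A) * a A * b (B - A) * c (S - B))"
        using xe h by simp
    qed auto
    with L R show ?thesis by simp
  qed
qed




lemma sg_swap:
  assumes "finite A" "finite D" "A \<inter> D = {}"
  shows "(-1::real) ^ card (invs A D) = (-1) ^ (card A * card D) * (-1) ^ card (invs D A)"
proof -
  have "card A * card D = card (invs A D) + card (invs D A)" using invs_swap[OF assms] by simp
  hence "(-1::real) ^ (card A * card D) * (-1) ^ card (invs D A)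
      = (-1) ^ card (invs A D) * ((-1) ^ card (invs D A) * (-1) ^ card (invs D A))"
    by (simp add: power_add mult_ac)
  also have "(-1::real) ^ card (invs D A) * (-1) ^ card (invs D A) = 1"
    by (simp add: power_add[symmetric] mult_2[symmetric])
  finally show ?thesis by simp
qed

lemma fwedge_comm_gen:
  assumes h: "\<And>A D. a A \<noteq> 0 \<Longrightarrow> b D \<noteq> 0 \<Longrightarrow> (-1::real) ^ (card A * card D) = c"
  shows "fwedge a b = fscale c (fwedge b a)"
proof (rule ext)
  fix S :: "nat set"
  show "fwedge a b S = fscale c (fwedge b a) S"
  proof (cases "finite S")
    case False thus ?thesis by (simp add: fwedge_alt fscale_def)
  next
    case True
    have "fwedge b a S = (\<Sum>A\<in>Pow S. (-1::real) ^ card (invs (S - A) (S - (S - A))) * b (S - A) * a (S - (S - A)))"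
      unfolding fwedge_alt[of b] if_P[OF True]
      by (rule sum.reindex_bij_witness[of _ "\<lambda>A. S - A" "\<lambda>A. S - A"]) (auto simp: double_diff)
    also have "\<dots> = (\<Sum>A\<in>Pow S. (-1::real) ^ card (invs (S - A) A) * b (S - A) * a A)"
      by (rule sum.cong) (auto simp: Diff_Diff_Int Int_absorb1)
    finally have R: "fwedge b a S = \<dots>" .
    have "fwedge a b S = (\<Sum>A\<in>Pow S. c * ((-1::real) ^ card (invs (S - A) A) * b (S - A) * a A))"
      unfolding fwedge_alt[of a] if_P[OF True]
    proof (rule sum.cong[OF refl])
      fix A assume "A \<in> Pow S" hence A: "A \<subseteq> S" by simp
      show "(-1::real) ^ card (invs A (S - A)) * a A * b (S - A) =
            c * ((-1) ^ card (invs (S - A) A) * b (S - A) * a A)"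
      proof (cases "a A = 0 \<or> b (S - A) = 0")
        case True thus ?thesis by auto
      next
        case False
        hence "(-1::real) ^ (card A * card (S - A)) = c" using h by auto
        moreover have "finite A" using A \<open>finite S\<close> finite_subset by auto
        ultimately show ?thesis using sg_swap[of A "S - A"] \<open>finite S\<close> by auto
      qed
    qed
    thus ?thesis using R by (simp add: fscale_def sum_distrib_left)
  qed
qed

lemma fscale_one[simp]: "fscale 1 a = a" by (simp add: fscale_def)

lemma fwedge_comm_even:
  assumes "\<And>A. a A \<noteq> 0 \<Longrightarrow> even (card A)"
  shows "fwedge a b = fwedge b a"
  using fwedge_comm_gen[of a b 1] assms by auto

lemma horiz_even: "horiz_2form a \<Longrightarrow> fwedge a b = fwedge b a"
  by (rule fwedge_comm_even) (auto simp: horiz_2form_def)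

lemma dx_anti: "fwedge (dx i) (dx j) = fneg (fwedge (dx j) (dx i))"
proof -
  have "fwedge (dx i) (dx j) = fscale (-1) (fwedge (dx j) (dx i))"
    by (rule fwedge_comm_gen) (auto simp: dx_def split: if_splits)
  thus ?thesis by (simp add: fscale_def fneg_def)
qed

lemma fneg_self_zero: "x = fneg x \<Longrightarrow> x = fzero"
  by (auto simp: fneg_def fzero_def fun_eq_iff)

lemma dx_sq: "fwedge (dx i) (dx i) = fzero"
  using dx_anti[of i i] by (rule fneg_self_zero)




lemma W_fadd_l: "fwedge (fadd a b) c = fadd (fwedge a c) (fwedge b c)"
  by (rule ext) (simp add: fwedge_alt fadd_def sum.distrib algebra_simps)
lemma W_fadd_r: "fwedge c (fadd a b) = fadd (fwedge c a) (fwedge c b)"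
  by (rule ext) (simp add: fwedge_alt fadd_def sum.distrib algebra_simps)
lemma W_fneg_l: "fwedge (fneg a) c = fneg (fwedge a c)"
  by (rule ext) (simp add: fwedge_alt fneg_def sum_negf)
lemma W_fneg_r: "fwedge c (fneg a) = fneg (fwedge c a)"
  by (rule ext) (simp add: fwedge_alt fneg_def sum_negf)
lemma W_fscale_l: "fwedge (fscale r a) c = fscale r (fwedge a c)"
  by (rule ext) (simp add: fwedge_alt fscale_def sum_distrib_left algebra_simps)
lemma W_fscale_r: "fwedge c (fscale r a) = fscale r (fwedge c a)"
  by (rule ext) (simp add: fwedge_alt fscale_def sum_distrib_left algebra_simps)
lemma W_fzero_l: "fwedge fzero c = fzero"
  by (rule ext) (simp add: fwedge_alt fzero_def)
lemma W_fzero_r: "fwedge c fzero = fzero"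
  by (rule ext) (simp add: fwedge_alt fzero_def)

lemma fsum3: "fsum f {..<3::nat} = fadd (fadd (f 0) (f 1)) (f 2)"
  by (rule ext) (simp add: fsum_def fadd_def lessThan_Suc eval_nat_numeral)
lemma fsum7: "fsum f {..<7::nat} = fadd (fadd (fadd (fadd (fadd (fadd (f 0) (f 1)) (f 2)) (f 3)) (f 4)) (f 5)) (f 6)"
  by (rule ext) (simp add: fsum_def fadd_def lessThan_Suc eval_nat_numeral)

lemma W_assoc': "fwedge a (fwedge b c) = fwedge (fwedge a b) c"
  by (rule fwedge_assoc[symmetric])

lemma dx_ord: "j < i \<Longrightarrow> fwedge (dx i) (dx j) = fneg (fwedge (dx j) (dx i))"
  by (rule dx_anti)
lemma dx_ord2: "j < i \<Longrightarrow> fwedge (fwedge x (dx i)) (dx j) = fneg (fwedge (fwedge x (dx j)) (dx i))"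
  by (simp only: fwedge_assoc dx_anti[of i j] W_fneg_r)
lemma dx_sq2: "fwedge (fwedge x (dx i)) (dx i) = fzero"
  by (simp add: fwedge_assoc dx_sq W_fzero_r)

lemmas normW = W_fadd_l W_fadd_r W_fneg_l W_fneg_r W_fscale_l W_fscale_r W_fzero_l W_fzero_r
  fsum3 fsum7 W_assoc' dx_ord dx_ord2 dx_sq dx_sq2

lemmas unfoldQ = FA_def Qminus_def Qplus_def Qzero_def blk_def blkidx_def rowb_def colb_def
  vscale_def mscale_def mneg_def mzero_def madd_def mwedge3_def bracket_def cross_def vadd_def outer_def
  mscale7_def Let_def ev_def Jev_def e0_def trw_def


lemma fsum_cong: "(\<And>i. i \<in> I \<Longrightarrow> f i = g i) \<Longrightarrow> fsum f I = fsum g I"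
  unfolding fsum_def by (rule ext) (simp cong: sum.cong)

lemma trFQ_madd: "trFQ a b (madd7 X Y) = fadd (trFQ a b X) (trFQ a b Y)"
  apply (simp add: trFQ_def trw_def madd7_def normW)
  apply (rule ext)
  apply (simp add: fadd_def algebra_simps)
  done

lemma trFQ_mscale: "trFQ a b (mscale7 c X) = fscale c (trFQ a b X)"
  apply (simp add: trFQ_def trw_def mscale7_def normW)
  apply (rule ext)
  apply (simp add: fadd_def fscale_def algebra_simps)
  done

theorem mainTheorem10:
  fixes \<alpha> \<beta> :: fmat
  assumes horiz: "\<forall>i<3. \<forall>j<3. horiz_2form (\<alpha> i j) \<and> horiz_2form (\<beta> i j)"
    and skew: "\<forall>i<3. \<forall>j<3. \<alpha> j i = fneg (\<alpha> i j)"
    and symm: "\<forall>i<3. \<forall>j<3. \<beta> j i = \<beta> i j"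
    and traceless: "fsum (\<lambda>i. \<beta> i i) {..<3} = fzero"
    and bianchi1: "\<forall>i<3. fsum (\<lambda>j. fadd (fwedge (\<alpha> i j) (ev j)) (fwedge (\<beta> i j) (Jev j))) {..<3} = fzero"
    and bianchi2: "\<forall>i<3. fsum (\<lambda>j. fadd (fwedge (\<beta> i j) (ev j)) (fneg (fwedge (\<alpha> i j) (Jev j)))) {..<3} = fzero"
  shows "(\<forall>\<delta>::real. trFQ \<alpha> \<beta> (Qminus \<delta>) = fzero \<and> trFQ \<alpha> \<beta> (Qplus \<delta>) = fzero)
         \<and> trFQ \<alpha> \<beta> Qzero = fzero
         \<and> (\<forall>\<delta> m::real. trFQ \<alpha> \<beta> (Qm \<delta> m) = fzero)"
proof -
  have cA: "\<And>q i j. i < 3 \<Longrightarrow> j < 3 \<Longrightarrow> fwedge q (\<alpha> i j) = fwedge (\<alpha> i j) q"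
    using horiz horiz_even by metis
  have cB: "\<And>q i j. i < 3 \<Longrightarrow> j < 3 \<Longrightarrow> fwedge q (\<beta> i j) = fwedge (\<beta> i j) q"
    using horiz horiz_even by metis
  have b1: "\<And>i. i < 3 \<Longrightarrow> fsum (\<lambda>j. fadd (fwedge (\<alpha> i j) (ev j)) (fwedge (\<beta> i j) (Jev j))) {..<3} = fzero"
    using bianchi1 by blast
  have b2: "\<And>i. i < 3 \<Longrightarrow> fsum (\<lambda>j. fadd (fwedge (\<beta> i j) (ev j)) (fneg (fwedge (\<alpha> i j) (Jev j)))) {..<3} = fzero"
    using bianchi2 by blast
  have Z: "(fsum (\<lambda>i. fadd (fwedge (fsum (\<lambda>j. fadd (fwedge (\<beta> i j) (ev j)) (fneg (fwedge (\<alpha> i j) (Jev j)))) {..<3}) (Jev i))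
     (fneg (fwedge (fsum (\<lambda>j. fadd (fwedge (\<alpha> i j) (ev j)) (fwedge (\<beta> i j) (Jev j))) {..<3}) (ev i)))) {..<3}) = fzero"
  proof -
    have "\<And>i. i \<in> {..<3::nat} \<Longrightarrow> fadd (fwedge (fsum (\<lambda>j. fadd (fwedge (\<beta> i j) (ev j)) (fneg (fwedge (\<alpha> i j) (Jev j)))) {..<3}) (Jev i))
     (fneg (fwedge (fsum (\<lambda>j. fadd (fwedge (\<alpha> i j) (ev j)) (fwedge (\<beta> i j) (Jev j))) {..<3}) (ev i))) = fzero"
      using b1 b2 by (simp add: W_fzero_l) (simp add: fadd_def fneg_def fzero_def)
    hence "(fsum (\<lambda>i. fadd (fwedge (fsum (\<lambda>j. fadd (fwedge (\<beta> i j) (ev j)) (fneg (fwedge (\<alpha> i j) (Jev j)))) {..<3}) (Jev i))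
     (fneg (fwedge (fsum (\<lambda>j. fadd (fwedge (\<alpha> i j) (ev j)) (fwedge (\<beta> i j) (Jev j))) {..<3}) (ev i)))) {..<3}) = fsum (\<lambda>i. fzero) {..<3::nat}" by (rule fsum_cong)
    thus ?thesis by (simp add: fsum_def fzero_def)
  qed
  have M: "\<And>\<delta>. trFQ \<alpha> \<beta> (Qminus \<delta>) = fzero"
    apply (simp add: trFQ_def unfoldQ normW cA cB)
    apply (rule ext)
    apply (simp add: fadd_def fneg_def fscale_def fzero_def algebra_simps)
    done
  have P: "\<And>\<delta>. trFQ \<alpha> \<beta> (Qplus \<delta>) = fzero"
  proof -
    fix \<delta>
    have "trFQ \<alpha> \<beta> (Qplus \<delta>) = fscale (2 * (1 + \<delta>)) (fsum (\<lambda>i. fadd (fwedge (fsum (\<lambda>j. fadd (fwedge (\<beta> i j) (ev j)) (fneg (fwedge (\<alpha> i j) (Jev j)))) {..<3}) (Jev i))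
     (fneg (fwedge (fsum (\<lambda>j. fadd (fwedge (\<alpha> i j) (ev j)) (fwedge (\<beta> i j) (Jev j))) {..<3}) (ev i)))) {..<3})"
      apply (simp add: trFQ_def unfoldQ normW cA cB)
      apply (rule ext)
      apply (simp add: fadd_def fneg_def fscale_def fzero_def algebra_simps)
      done
    thus "trFQ \<alpha> \<beta> (Qplus \<delta>) = fzero" using Z by (simp add: fscale_def fzero_def)
  qed
  have Q0: "trFQ \<alpha> \<beta> Qzero = fzero"
  proof -
    have "trFQ \<alpha> \<beta> Qzero = fadd (fscale 4 (fsum (\<lambda>i. fadd (fwedge (fsum (\<lambda>j. fadd (fwedge (\<beta> i j) (ev j)) (fneg (fwedge (\<alpha> i j) (Jev j)))) {..<3}) (Jev i))
     (fneg (fwedge (fsum (\<lambda>j. fadd (fwedge (\<alpha> i j) (ev j)) (fwedge (\<beta> i j) (Jev j))) {..<3}) (ev i)))) {..<3}))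
     (fscale (-8) (fwedge (fsum (\<lambda>i. \<beta> i i) {..<3}) (fsum (\<lambda>l. fwedge (ev l) (Jev l)) {..<3})))"
      apply (simp add: trFQ_def unfoldQ normW cA cB)
      apply (rule ext)
      apply (simp add: fadd_def fneg_def fscale_def fzero_def algebra_simps)
      done
    moreover have "fwedge (\<lambda>S. 0) c = (\<lambda>S. 0)" for c :: form
      using W_fzero_l[of c] by (simp add: fzero_def)
    ultimately show ?thesis using Z traceless by (simp add: fscale_def fzero_def fadd_def)
  qed
  have "\<And>\<delta> m. trFQ \<alpha> \<beta> (Qm \<delta> m) = fzero"
    by (simp add: Qm_def trFQ_madd trFQ_mscale M P Q0) (simp add: fadd_def fscale_def fzero_def)
  with M P Q0 show ?thesis by blast
qed

end
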